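(* Let $K$ be an infinite subset of $\mathbb N$. Then there is an unbounded, concave and slowly varying modulus $f\colon[0,\infty)\to[0,\infty)$ such that $d^f(K)=1$.
   Context: A modulus is a function $f\colon[0,\infty)\to[0,\infty)$ such that $f(x)=0$ iff $x=0$, $f(x+y)\le f(x)+f(y)$ for all $x,y\ge0$, $f$ is increasing, and $f$ is continuous. A modulus $f$ is slowly varying if $\lim_{x\to\infty}\frac{f(ax)}{f(x)}=1$ for every $a>0$. For an unbounded modulus $f$ and $K\subseteq\mathbb N$, the $f$-density is $d^f(K)=\lim_{n\to\infty}\frac{f(|\{k\le n:k\in K\}|)}{f(n)}$ (when the limit exists). *)

theory Defs
  imports "HOL-Analysis.Analysis"
begin

definition is_modulus :: "(real \<Rightarrow> real) \<Rightarrow> bool" where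
  "is_modulus f \<longleftrightarrow>
     (\<forall>x\<ge>0. f x \<ge> 0) \<and>
     (\<forall>x\<ge>0. f x = 0 \<longleftrightarrow> x = 0) \<and>
     (\<forall>x\<ge>0. \<forall>y\<ge>0. f (x + y) \<le> f x + f y) \<and>
     mono_on {0..} f \<and>
     continuous_on {0..} f"

definition unbounded_modulus :: "(real \<Rightarrow> real) \<Rightarrow> bool" where
  "unbounded_modulus f \<longleftrightarrow> \<not> bdd_above (f ` {0..})"

definition slowly_varying :: "(real \<Rightarrow> real) \<Rightarrow> bool" where
  "slowly_varying f \<longleftrightarrow> (\<forall>a>0. ((\<lambda>x. f (a * x) / f x) \<longlongrightarrow> 1) at_top)"

definition count_upto :: "nat set \<Rightarrow> nat \<Rightarrow> nat" where
  "count_upto K n = card {k. k \<le> n \<and> k \<in> K}"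

definition has_f_density :: "(real \<Rightarrow> real) \<Rightarrow> nat set \<Rightarrow> real \<Rightarrow> bool" where
  "has_f_density f K d \<longleftrightarrow>
     ((\<lambda>n. f (real (count_upto K n)) / f (real n)) \<longlonglongrightarrow> d)"

end

theory Submission
  imports Defs
begin

lemma count_mono: "m \<le> n \<Longrightarrow> count_upto K m \<le> count_upto K n"
  unfolding count_upto_def
  by (rule card_mono) (auto intro: finite_subset[of _ "{..n}"])

lemma count_le: "count_upto K n \<le> Suc n"
proof -
  have "count_upto K n \<le> card {..n}" unfolding count_upto_def
    by (rule card_mono) auto
  thus ?thesis by simp
qed

lemma count_unbounded:
  assumes "infinite K" shows "\<exists>n. M \<le> count_upto K n"
proof -
  obtain S where S: "S \<subseteq> K" "finite S" "card S = M"
    using infinite_arbitrarily_large[OF assms] by blast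
  show ?thesis
  proof (cases "S = {}")
    case True thus ?thesis using S by auto
  next
    case False
    have "S \<subseteq> {k. k \<le> Max S \<and> k \<in> K}" using S by auto
    hence "card S \<le> count_upto K (Max S)" unfolding count_upto_def
      by (rule card_mono[rotated]) (auto intro: finite_subset[of _ "{..Max S}"])
    thus ?thesis using S by auto
  qed
qed

primrec seqA :: "nat set \<Rightarrow> nat \<Rightarrow> nat" where
  "seqA K 0 = 1"
| "seqA K (Suc k) = 2 * seqA K k + (LEAST n. seqA K k \<le> count_upto K n)"

lemma seqA_Suc_ge: "2 * seqA K k \<le> seqA K (Suc k)" by simp

lemma seqA_ge_pow: "2 ^ k \<le> seqA K k"
  by (induction k) auto

lemma seqA_pos: "0 < seqA K k"
  using seqA_ge_pow[of k K] by (metis less_le_trans zero_less_numeral zero_less_power)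

lemma seqA_add: "2 ^ m * seqA K k \<le> seqA K (k + m)"
proof (induction m)
  case 0 thus ?case by simp
next
  case (Suc m)
  have "2 ^ Suc m * seqA K k = 2 * (2 ^ m * seqA K k)" by simp
  also have "\<dots> \<le> 2 * seqA K (k + m)" using Suc by simp
  also have "\<dots> \<le> seqA K (k + Suc m)" using seqA_Suc_ge[of K "k+m"] by simp
  finally show ?case .
qed

lemma seqA_mono: "j \<le> k \<Longrightarrow> seqA K j \<le> seqA K k"
  using seqA_add[of "k - j" K j] by (simp add: order_trans[OF _ seqA_add])
    (metis le_add_diff_inverse mult_le_mono1 one_le_numeral one_le_power order_trans seqA_add mult_1)

lemma seqA_count:
  assumes "infinite K" shows "seqA K k \<le> count_upto K (seqA K (Suc k))"
proof -
  let ?L = "LEAST n. seqA K k \<le> count_upto K n"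
  have "seqA K k \<le> count_upto K ?L"
    using count_unbounded[OF assms] by (rule LeastI_ex)
  also have "\<dots> \<le> count_upto K (seqA K (Suc k))" by (rule count_mono) simp
  finally show ?thesis .
qed

lemma seqA_bracket:
  assumes "0 \<le> x"
  shows "\<exists>m. x < real (seqA K m) \<and> (\<forall>k<m. real (seqA K k) \<le> x)"
proof -
  obtain n :: nat where n: "x < n" using reals_Archimedean2 by blast
  have "real n < 2 ^ n" by (metis of_nat_less_iff of_nat_numeral of_nat_power less_exp)
  also have "\<dots> \<le> real (seqA K n)" by (metis of_nat_le_iff of_nat_numeral of_nat_power seqA_ge_pow)
  finally have ex: "\<exists>m. x < real (seqA K m)" using n by (meson less_trans)
  let ?m = "LEAST m. x < real (seqA K m)"
  have "x < real (seqA K ?m)" using ex by (rule LeastI_ex)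
  moreover have "\<forall>k<?m. real (seqA K k) \<le> x" using not_less_Least by force
  ultimately show ?thesis by blast
qed

definition tt :: "nat set \<Rightarrow> nat \<Rightarrow> real \<Rightarrow> real" where
  "tt K k x = min (x / real (seqA K k)) 1"

definition fK :: "nat set \<Rightarrow> real \<Rightarrow> real" where
  "fK K x = (\<Sum>k. tt K k x)"

lemma inv_seqA_le: "1 / real (seqA K k) \<le> (1/2) ^ k"
proof -
  have "(2::real) ^ k \<le> real (seqA K k)"
    by (metis of_nat_le_iff of_nat_numeral of_nat_power seqA_ge_pow)
  hence "1 / real (seqA K k) \<le> 1 / 2 ^ k"
    using seqA_pos[of K k] by (intro divide_left_mono) auto
  thus ?thesis by (simp add: power_one_over)
qed

lemma min1_lip: "\<bar>min (a::real) 1 - min b 1\<bar> \<le> \<bar>a - b\<bar>"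
  by (auto simp: min_def)

lemma tt_lip: "\<bar>tt K k y - tt K k x\<bar> \<le> \<bar>y - x\<bar> * (1/2) ^ k"
proof -
  have a: "0 < real (seqA K k)" using seqA_pos by simp
  have "\<bar>tt K k y - tt K k x\<bar> \<le> \<bar>y / real (seqA K k) - x / real (seqA K k)\<bar>"
    unfolding tt_def by (rule min1_lip)
  also have "\<dots> = \<bar>y - x\<bar> * (1 / real (seqA K k))"
    using a by (simp add: diff_divide_distrib[symmetric] abs_divide)
  also have "\<dots> \<le> \<bar>y - x\<bar> * (1/2) ^ k"
    by (intro mult_left_mono inv_seqA_le) auto
  finally show ?thesis .
qed

lemma tt_zero[simp]: "tt K k 0 = 0" by (simp add: tt_def)

lemma tt_bound: "\<bar>tt K k x\<bar> \<le> \<bar>x\<bar> * (1/2) ^ k"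
  using tt_lip[of K k x 0] by simp

lemma tt_summable: "summable (\<lambda>k. tt K k x)"
  by (rule summable_comparison_test[where g="\<lambda>k. \<bar>x\<bar> * (1/2) ^ k"])
     (use tt_bound in \<open>auto intro: summable_mult\<close>)

lemma tt_nonneg: "0 \<le> x \<Longrightarrow> 0 \<le> tt K k x"
  unfolding tt_def by simp

lemma tt_le1: "tt K k x \<le> 1"
  unfolding tt_def by simp

lemma tt_mono: "x \<le> y \<Longrightarrow> tt K k x \<le> tt K k y"
  unfolding tt_def using seqA_pos[of K k]
  by (intro min.mono divide_right_mono) auto

lemma tt_one: "real (seqA K k) \<le> x \<Longrightarrow> tt K k x = 1"
  unfolding tt_def using seqA_pos[of K k] by (simp add: min_def field_simps)

lemma geom_half: "(\<Sum>k. (1/2::real) ^ k) = 2"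
  by (simp add: suminf_geometric)

lemma fK_diff_le: "fK K y - fK K x \<le> \<bar>y - x\<bar> * 2"
proof -
  have "fK K y - fK K x = (\<Sum>k. tt K k y - tt K k x)"
    unfolding fK_def by (rule suminf_diff) (rule tt_summable)+
  also have "\<dots> \<le> (\<Sum>k. \<bar>y - x\<bar> * (1/2) ^ k)"
  proof (rule suminf_le)
    show "\<And>k. tt K k y - tt K k x \<le> \<bar>y - x\<bar> * (1/2) ^ k"
      using tt_lip by (metis abs_le_D1)
    show "summable (\<lambda>k. tt K k y - tt K k x)" by (intro summable_diff tt_summable)
    show "summable (\<lambda>k. \<bar>y - x\<bar> * (1/2::real) ^ k)" by (intro summable_mult) simp
  qed
  also have "\<dots> = \<bar>y - x\<bar> * 2"
    by (subst suminf_mult) (simp_all add: geom_half)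
  finally show ?thesis .
qed

lemma fK_lip: "\<bar>fK K y - fK K x\<bar> \<le> 2 * \<bar>y - x\<bar>"
  using fK_diff_le[of K y x] fK_diff_le[of K x y] by (simp add: abs_minus_commute)

lemma fK_mono: "x \<le> y \<Longrightarrow> fK K x \<le> fK K y"
  unfolding fK_def by (intro suminf_le tt_summable tt_mono)

lemma fK_zero[simp]: "fK K 0 = 0"
  unfolding fK_def by simp

lemma fK_nonneg: "0 \<le> x \<Longrightarrow> 0 \<le> fK K x"
  using fK_mono[of 0 x K] by simp

lemma fK_lower:
  assumes "0 \<le> x" "real (seqA K j) \<le> x"
  shows "real (Suc j) \<le> fK K x"
proof -
  have "(\<Sum>k\<in>{..j}. tt K k x) \<le> fK K x"
    unfolding fK_def by (rule sum_le_suminf[OF tt_summable]) (auto intro: tt_nonneg[OF assms(1)])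
  moreover have "(\<Sum>k\<in>{..j}. tt K k x) = (\<Sum>k\<in>{..j}. 1)"
  proof (rule sum.cong)
    fix k assume "k \<in> {..j}"
    hence "real (seqA K k) \<le> real (seqA K j)" using seqA_mono by simp
    thus "tt K k x = 1" using assms by (intro tt_one) simp
  qed simp
  ultimately show ?thesis by simp
qed

lemma fK_upper:
  assumes "0 \<le> x" "x < real (seqA K m)"
  shows "fK K x \<le> real m + 2"
proof -
  have "fK K x = (\<Sum>n. tt K (n + m) x) + (\<Sum>i<m. tt K i x)"
    unfolding fK_def by (rule suminf_split_initial_segment) (rule tt_summable)
  moreover have "(\<Sum>i<m. tt K i x) \<le> (\<Sum>i<m. 1)"
    by (intro sum_mono tt_le1)
  moreover have "(\<Sum>n. tt K (n + m) x) \<le> (\<Sum>n. (1/2::real) ^ n)"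
  proof (rule suminf_le)
    fix n
    have p: "0 < real (seqA K (n + m))" using seqA_pos by simp
    have q: "(2::real) ^ n * real (seqA K m) \<le> real (seqA K (n + m))"
      using seqA_add[of n K m] by (metis add.commute of_nat_le_iff of_nat_mult of_nat_numeral of_nat_power)
    have "tt K (n + m) x \<le> x / real (seqA K (n + m))" unfolding tt_def by simp
    also have "\<dots> \<le> real (seqA K m) / real (seqA K (n + m))"
      using assms p by (intro divide_right_mono) auto
    also have "\<dots> \<le> (1/2) ^ n"
    proof -
      have "real (seqA K m) = (1/2) ^ n * (2 ^ n * real (seqA K m))"
        by (simp add: power_one_over)
      also have "\<dots> \<le> (1/2) ^ n * real (seqA K (n + m))"
        using q by (intro mult_left_mono) auto
      finally show ?thesis using p by (simp add: pos_divide_le_eq)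
    qed
    finally show "tt K (n + m) x \<le> (1/2) ^ n" .
  next
    show "summable (\<lambda>n. tt K (n + m) x)"
      by (rule summable_ignore_initial_segment[OF tt_summable])
  qed simp
  ultimately show ?thesis by (simp add: geom_half)
qed

lemma fK_double:
  assumes "0 \<le> x" shows "fK K (2 * x) \<le> fK K x + 3"
proof -
  obtain m where m: "x < real (seqA K m)" "\<forall>k<m. real (seqA K k) \<le> x"
    using seqA_bracket[OF assms] by blast
  have "2 * x < real (seqA K (Suc m))"
  proof -
    have "real (2 * seqA K m) \<le> real (seqA K (Suc m))" by (simp only: of_nat_le_iff seqA_Suc_ge)
    thus ?thesis using m(1) by simp
  qed
  hence up: "fK K (2 * x) \<le> real (Suc m) + 2" using assms by (intro fK_upper) auto
  show ?thesis
  proof (cases m)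
    case 0 thus ?thesis using up fK_nonneg[OF assms, of K] by simp
  next
    case (Suc j)
    hence "real (Suc j) \<le> fK K x" using m(2) assms by (intro fK_lower) auto
    thus ?thesis using up Suc by simp
  qed
qed

lemma fK_pow:
  assumes "0 \<le> x" shows "fK K (2 ^ j * x) \<le> fK K x + 3 * j"
proof (induction j)
  case 0 thus ?case by simp
next
  case (Suc j)
  have "fK K (2 ^ Suc j * x) = fK K (2 * (2 ^ j * x))" by (simp add: mult.assoc)
  also have "\<dots> \<le> fK K (2 ^ j * x) + 3" using assms by (intro fK_double) simp
  finally show ?case using Suc by simp
qed

lemma fK_at_top: "filterlim (fK K) at_top at_top"
proof (subst filterlim_at_top, intro allI)
  fix Z :: real
  obtain j :: nat where j: "Z \<le> real j" using real_arch_simple by blast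
  have "\<forall>x\<ge>real (seqA K j). Z \<le> fK K x"
  proof (intro allI impI)
    fix x assume x: "real (seqA K j) \<le> x"
    hence "0 \<le> x" using of_nat_0_le_iff[of "seqA K j"] by linarith
    hence "real (Suc j) \<le> fK K x" using x by (intro fK_lower)
    thus "Z \<le> fK K x" using j by simp
  qed
  thus "eventually (\<lambda>x. Z \<le> fK K x) at_top" unfolding eventually_at_top_linorder by blast
qed

lemma ratio_tendsto_1:
  fixes g h :: "'a \<Rightarrow> real"
  assumes b: "eventually (\<lambda>x. \<bar>g x - h x\<bar> \<le> C) F" and h: "filterlim h at_top F"
  shows "((\<lambda>x. g x / h x) \<longlongrightarrow> 1) F"
proof -
  have ev: "eventually (\<lambda>x. 0 < h x) F" using h by (simp add: filterlim_at_top_dense)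
  have C0: "((\<lambda>x. C / h x) \<longlongrightarrow> 0) F"
    by (rule tendsto_divide_0[OF tendsto_const filterlim_at_top_imp_at_infinity[OF h]])
  have "((\<lambda>x. g x / h x - 1) \<longlongrightarrow> 0) F"
  proof (rule Lim_null_comparison[OF _ C0])
    show "eventually (\<lambda>x. norm (g x / h x - 1) \<le> C / h x) F"
      using b ev
    proof eventually_elim
      case (elim x)
      have "g x / h x - 1 = (g x - h x) / h x" using elim(2) by (simp add: field_simps)
      hence "norm (g x / h x - 1) = \<bar>g x - h x\<bar> / h x" using elim(2) by (simp add: abs_divide)
      also have "\<dots> \<le> C / h x" using elim by (intro divide_right_mono) auto
      finally show ?case .
    qed
  qed
  thus ?thesis by (simp add: Lim_null[symmetric])
qed

lemma fK_sub: "0 \<le> x \<Longrightarrow> 0 \<le> y \<Longrightarrow> fK K (x + y) \<le> fK K x + fK K y"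
proof -
  assume x: "0 \<le> x" and y: "0 \<le> y"
  have t: "tt K k (x + y) \<le> tt K k x + tt K k y" for k
  proof -
    have a: "0 < real (seqA K k)" using seqA_pos by simp
    have "(x + y) / real (seqA K k) = x / real (seqA K k) + y / real (seqA K k)"
      by (simp add: add_divide_distrib)
    moreover have "0 \<le> x / real (seqA K k)" "0 \<le> y / real (seqA K k)" using a x y by auto
    ultimately show ?thesis unfolding tt_def by (auto simp: min_def)
  qed
  have "fK K (x + y) \<le> (\<Sum>k. tt K k x + tt K k y)"
    unfolding fK_def by (intro suminf_le t summable_add tt_summable)
  also have "\<dots> = fK K x + fK K y"
    unfolding fK_def by (intro suminf_add[symmetric] tt_summable)
  finally show ?thesis .
qed

lemma fK_pos: "0 < x \<Longrightarrow> 0 < fK K x"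
proof -
  assume x: "0 < x"
  have "(\<Sum>k\<in>{0}. tt K k x) \<le> fK K x"
    unfolding fK_def by (rule sum_le_suminf[OF tt_summable]) (use x in \<open>auto intro: tt_nonneg\<close>)
  moreover have "tt K 0 x = min x 1" by (simp add: tt_def)
  ultimately show ?thesis using x by simp
qed

lemma fK_concave: "concave_on {0..} (fK K)"
  unfolding concave_on_iff
proof (intro conjI ballI allI impI)
  show "convex {0::real..}" by simp
  fix x y u v :: real
  assume xy: "x \<in> {0..}" "y \<in> {0..}" and uv: "0 \<le> u" "0 \<le> v" "u + v = 1"
  have t: "u * tt K k x + v * tt K k y \<le> tt K k (u *\<^sub>R x + v *\<^sub>R y)" for k
  proof -
    have a: "0 < real (seqA K k)" using seqA_pos by simp
    have e: "(u * x + v * y) / real (seqA K k) = u * (x / real (seqA K k)) + v * (y / real (seqA K k))"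
      by (simp add: add_divide_distrib)
    have 1: "u * tt K k x + v * tt K k y \<le> u * 1 + v * 1"
      using uv by (intro add_mono mult_left_mono tt_le1) auto
    have 2: "u * tt K k x + v * tt K k y \<le> u * (x / real (seqA K k)) + v * (y / real (seqA K k))"
      using uv unfolding tt_def by (intro add_mono mult_left_mono) auto
    show ?thesis using 1 2 uv e unfolding tt_def by simp
  qed
  have "u * fK K x + v * fK K y = (\<Sum>k. u * tt K k x + v * tt K k y)"
    unfolding fK_def
    by (simp add: suminf_add[symmetric] summable_mult tt_summable suminf_mult[symmetric] del: suminf_add)
  also have "\<dots> \<le> fK K (u *\<^sub>R x + v *\<^sub>R y)"
    unfolding fK_def by (intro suminf_le t summable_add summable_mult tt_summable)
  finally show "u * fK K x + v * fK K y \<le> fK K (u *\<^sub>R x + v *\<^sub>R y)" .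
qed

lemma fK_modulus: "is_modulus (fK K)"
  unfolding is_modulus_def
proof (intro conjI allI impI ballI)
  show "\<And>x. 0 \<le> x \<Longrightarrow> 0 \<le> fK K x" by (rule fK_nonneg)
  show "\<And>x. 0 \<le> x \<Longrightarrow> (fK K x = 0) = (x = 0)"
    using fK_pos by (metis fK_zero less_eq_real_def less_irrefl)
  show "\<And>x y. 0 \<le> x \<Longrightarrow> 0 \<le> y \<Longrightarrow> fK K (x + y) \<le> fK K x + fK K y" by (rule fK_sub)
  show "mono_on {0..} (fK K)" by (intro mono_onI fK_mono)
  have "2-lipschitz_on {0..} (fK K)"
    by (rule lipschitz_onI) (use fK_lip in \<open>auto simp: dist_real_def\<close>)
  thus "continuous_on {0..} (fK K)" by (rule lipschitz_on_continuous_on)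
qed

lemma fK_unbounded: "unbounded_modulus (fK K)"
  unfolding unbounded_modulus_def
proof
  assume "bdd_above (fK K ` {0..})"
  then obtain B where B: "\<And>x. 0 \<le> x \<Longrightarrow> fK K x \<le> B" by (auto simp: bdd_above_def)
  obtain j :: nat where j: "B \<le> real j" using real_arch_simple by blast
  have "real (Suc j) \<le> fK K (real (seqA K j))" by (intro fK_lower) auto
  moreover have "fK K (real (seqA K j)) \<le> B" by (intro B) simp
  ultimately show False using j by simp
qed

lemma fK_scale_bound:
  assumes "0 < a"
  shows "\<exists>C. \<forall>x\<ge>0. \<bar>fK K (a * x) - fK K x\<bar> \<le> C"
proof -
  obtain j :: nat where j: "max a (1/a) < 2 ^ j" using real_arch_pow[of 2 "max a (1/a)"] by auto
  have "\<bar>fK K (a * x) - fK K x\<bar> \<le> 3 * real j" if x: "0 \<le> x" for x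
  proof (cases "1 \<le> a")
    case True
    have "fK K x \<le> fK K (a * x)" using True x mult_right_mono[of 1 a x] by (intro fK_mono) simp
    moreover have "fK K (a * x) \<le> fK K (2 ^ j * x)" using j x by (intro fK_mono mult_right_mono) auto
    moreover have "fK K (2 ^ j * x) \<le> fK K x + 3 * j" using x by (rule fK_pow)
    ultimately show ?thesis by simp
  next
    case False
    have ax: "0 \<le> a * x" using assms x by simp
    have "fK K (a * x) \<le> fK K x" using False x mult_right_mono[of a 1 x] by (intro fK_mono) simp
    moreover have "1 \<le> 2 ^ j * a" using j assms by (simp add: field_simps)
    hence "x \<le> 2 ^ j * (a * x)" using x by (metis mult.assoc mult_1 mult_right_mono)
    hence "fK K x \<le> fK K (2 ^ j * (a * x))" by (rule fK_mono)
    moreover have "fK K (2 ^ j * (a * x)) \<le> fK K (a * x) + 3 * j" using ax by (rule fK_pow)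
    ultimately show ?thesis by simp
  qed
  thus ?thesis by blast
qed

lemma fK_slowly: "slowly_varying (fK K)"
  unfolding slowly_varying_def
proof (intro allI impI)
  fix a :: real assume a: "0 < a"
  obtain C where C: "\<And>x. 0 \<le> x \<Longrightarrow> \<bar>fK K (a * x) - fK K x\<bar> \<le> C"
    using fK_scale_bound[OF a] by blast
  show "((\<lambda>x. fK K (a * x) / fK K x) \<longlongrightarrow> 1) at_top"
  proof (rule ratio_tendsto_1[OF _ fK_at_top])
    show "eventually (\<lambda>x. \<bar>fK K (a * x) - fK K x\<bar> \<le> C) at_top"
      by (rule eventually_mono[OF eventually_ge_at_top[of "0::real"]]) (rule C)
  qed
qed

lemma fK_density:
  assumes "infinite K" shows "has_f_density (fK K) K 1"
  unfolding has_f_density_def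
proof (rule ratio_tendsto_1[where C=3])
  show "filterlim (\<lambda>n. fK K (real n)) at_top sequentially"
    by (rule filterlim_compose[OF fK_at_top filterlim_real_sequentially])
  show "eventually (\<lambda>n. \<bar>fK K (real (count_upto K n)) - fK K (real n)\<bar> \<le> 3) sequentially"
  proof (rule always_eventually, intro allI)
    fix n
    have "real (count_upto K n) \<le> real n + 1" using count_le[of K n] by simp
    hence "fK K (real (count_upto K n)) \<le> fK K (real n + 1)" by (rule fK_mono)
    also have "\<dots> \<le> fK K (real n) + 2" using fK_lip[of K "real n + 1" "real n"] by simp
    finally have up: "fK K (real (count_upto K n)) \<le> fK K (real n) + 2" .
    obtain m where m: "real n < real (seqA K m)" "\<forall>k<m. real (seqA K k) \<le> real n"
      using seqA_bracket[of "real n" K] by auto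
    have nup: "fK K (real n) \<le> real m + 2" using m(1) by (intro fK_upper) auto
    have lo: "fK K (real n) - 3 \<le> fK K (real (count_upto K n))"
    proof (cases "m \<le> 1")
      case True thus ?thesis using nup fK_nonneg[of "real (count_upto K n)" K] by simp
    next
      case False
      then obtain j where j: "m = Suc (Suc j)" by (metis Suc_le_eq less_imp_Suc_add nat_less_le not_le one_add_one plus_1_eq_Suc add_Suc_shift add.commute)
      have "Suc j < m" using j by simp
      hence "real (seqA K (Suc j)) \<le> real n" using m(2) by blast
      hence "seqA K (Suc j) \<le> n" by (simp only: of_nat_le_iff)
      hence "count_upto K (seqA K (Suc j)) \<le> count_upto K n" by (rule count_mono)
      hence "seqA K j \<le> count_upto K n" using seqA_count[OF assms, of j] by simp
      hence "real (Suc j) \<le> fK K (real (count_upto K n))" by (intro fK_lower) auto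
      thus ?thesis using nup j by simp
    qed
    show "\<bar>fK K (real (count_upto K n)) - fK K (real n)\<bar> \<le> 3" using up lo by simp
  qed
qed

theorem lemma2p5:
  fixes K :: "nat set"
  assumes "infinite K"
  shows "\<exists>f :: real \<Rightarrow> real. is_modulus f \<and> unbounded_modulus f \<and>
           concave_on {0..} f \<and> slowly_varying f \<and> has_f_density f K 1"
  using fK_modulus fK_unbounded fK_concave fK_slowly fK_density[OF assms] by blast

end
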